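(* Let $k=k(x)\ge2$ and $t=t(x)\ge1$ be functions of $x$ ($t$ integer-valued), and let $m$ be a uniformly random integer in $[1,x]$. Then \[ \mathbb{P}\big(\forall\,0\le i<t\ \exists\text{ prime }p_i>k\text{ with }v_{p_i}(m-i)=1\big)=1-O\Big(\frac{t\log k}{\log x}+\frac tk\Big), \] with an absolute implied constant.
   Context: $v_p$ denotes the $p$-adic valuation on the integers. *)

theory Defs
  imports Complex_Main "HOL-Computational_Algebra.Primes"
begin

text \<open>Good event: for every 0 <= i < t there is a prime p > k with v_p(m - i) = 1.
  (For m - i = 0 the valuation is infinite, and Isabelle's multiplicity of 0 is 0, so
  the condition correctly fails.)\<close>
definition good :: "real \<Rightarrow> nat \<Rightarrow> nat \<Rightarrow> bool" where
  "good k t m \<longleftrightarrow> (\<forall>i<t. \<exists>p::nat. prime p \<and> real p > k \<and>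
       multiplicity (int p) (int m - int i) = 1)"

definition prob_good :: "real \<Rightarrow> real \<Rightarrow> nat \<Rightarrow> real" where
  "prob_good x k t = real (card {m \<in> {1..nat \<lfloor>x\<rfloor>}. good k t m}) / real (nat \<lfloor>x\<rfloor>)"

end

theory Submission
  imports Defs
begin

lemma mult_int: "multiplicity (int p) (int n) = multiplicity p n"
  unfolding multiplicity_def by (simp flip: of_nat_power add: int_dvd_int_iff)

lemma ln_factor:
  fixes n :: nat and P :: "nat set"
  assumes n: "n > 0" and P: "finite P" "\<And>p. p \<in> P \<Longrightarrow> prime p"
    and sub: "prime_factors n \<subseteq> P"
  shows "ln (real n) = (\<Sum>p\<in>P. real (multiplicity p n) * ln (real p))"
proof -
  have e: "(\<Prod>p \<in> prime_factors n. p ^ multiplicity p n) = n"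
    using prod_prime_factors[of n] n by simp
  have "real n = real (\<Prod>p \<in> prime_factors n. p ^ multiplicity p n)"
    by (simp only: e)
  also have "\<dots> = (\<Prod>p \<in> prime_factors n. real (p ^ multiplicity p n))"
    by (rule of_nat_prod)
  also have "\<dots> = (\<Prod>p \<in> prime_factors n. real p ^ multiplicity p n)"
    by (simp only: of_nat_power)
  finally have "real n = (\<Prod>p \<in> prime_factors n. real p ^ multiplicity p n)" .
  hence "ln (real n) = (\<Sum>p \<in> prime_factors n. ln (real p ^ multiplicity p n))"
    by (simp add: ln_prod prime_gt_0_nat in_prime_factors_imp_prime)
  also have "\<dots> = (\<Sum>p \<in> prime_factors n. real (multiplicity p n) * ln (real p))"
    by (intro sum.cong refl) (simp add: ln_realpow prime_gt_0_nat in_prime_factors_imp_prime)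
  also have "\<dots> = (\<Sum>p\<in>P. real (multiplicity p n) * ln (real p))"
  proof (rule sum.mono_neutral_left[OF P(1) sub])
    show "\<forall>i\<in>P - prime_factors n. real (multiplicity i n) * ln (real i) = 0"
    proof
      fix p assume "p \<in> P - prime_factors n"
      hence "prime p" "\<not> p dvd n" using P(2) n by (auto simp: in_prime_factors_iff)
      thus "real (multiplicity p n) * ln (real p) = 0"
        by (simp add: not_dvd_imp_multiplicity_0)
    qed
  qed
  finally show ?thesis .
qed

lemma card_multiples:
  fixes d N :: nat assumes "d > 0"
  shows "card {n \<in> {1..N}. d dvd n} = N div d"
proof -
  have "{n \<in> {1..N}. d dvd n} = (\<lambda>q. d * q) ` {1..N div d}"
  proof safe
    fix n assume "n \<in> {1..N}" "d dvd n"
    then obtain q where q: "n = d * q" by blast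
    with \<open>n \<in> {1..N}\<close> assms have "q \<in> {1..N div d}"
      by (auto simp: less_eq_div_iff_mult_less_eq mult.commute intro!: Nat.gr0I)
    thus "n \<in> (\<lambda>q. d * q) ` {1..N div d}" using q by blast
  next
    fix q assume "q \<in> {1..N div d}"
    thus "d * q \<in> {1..N}" using assms
      by (auto simp: less_eq_div_iff_mult_less_eq mult.commute)
  qed auto
  also have "card \<dots> = N div d"
    by (subst card_image) (use assms in \<open>auto simp: inj_on_def\<close>)
  finally show ?thesis .
qed

lemma geom_le:
  fixes r :: real assumes "0 \<le> r" "r < 1"
  shows "(\<Sum>a\<in>{1..M}. r ^ a) \<le> r / (1 - r)"
proof -
  have "(\<Sum>a\<in>{1..M}. r ^ a) = r * (1 - r ^ M) / (1 - r)"
  proof (induction M)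
    case 0 then show ?case by simp
  next
    case (Suc M)
    have "(\<Sum>a\<in>{1..Suc M}. r ^ a) = (\<Sum>a\<in>{1..M}. r ^ a) + r ^ Suc M"
      by simp
    also have "\<dots> = r * (1 - r ^ M) / (1 - r) + r ^ Suc M"
      using Suc.IH by simp
    also have "\<dots> = r * (1 - r ^ Suc M) / (1 - r)"
      using assms by (simp add: field_simps)
    finally show ?case .
  qed
  also have "\<dots> \<le> r / (1 - r)"
    using assms by (simp add: divide_right_mono mult_left_le)
  finally show ?thesis .
qed

lemma sq_sum_le:
  fixes K :: nat assumes "K \<ge> 1"
  shows "(\<Sum>j\<in>{K+1..K+d}. 1 / (real j)^2) \<le> 1 / real K - 1 / real (K + d)"
proof (induction d)
  case 0 then show ?case by simp
next
  case (Suc d)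
  have "(\<Sum>j\<in>{K+1..K+Suc d}. 1 / (real j)^2) = (\<Sum>j\<in>{K+1..K+d}. 1 / (real j)^2) + 1 / (real (K + Suc d))^2"
    by simp
  also have "\<dots> \<le> 1 / real K - 1 / real (K + d) + 1 / (real (K + Suc d))^2"
    using Suc by simp
  also have "1 / (real (K + Suc d))^2 \<le> 1 / real (K + d) - 1 / real (K + Suc d)"
  proof -
    define a where "a = real (K + d)"
    have a: "a > 0" using assms by (simp add: a_def)
    have "real (K + Suc d) = a + 1" by (simp add: a_def)
    moreover have "1 / (a+1)^2 \<le> 1 / a - 1 / (a + 1)"
    proof -
      have "1 / a - 1 / (a + 1) = 1 / (a * (a + 1))" using a by (simp add: field_simps)
      also have "1 / (a+1)^2 \<le> 1 / (a * (a + 1))"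
        using a by (intro divide_left_mono) (auto simp: power2_eq_square intro!: mult_pos_pos)
      finally show ?thesis by simp
    qed
    ultimately show ?thesis by (simp add: a_def ac_simps)
  qed
  finally show ?case by simp
qed


lemma card_as_sum:
  assumes "finite A"
  shows "real (card {a\<in>A. P a}) = (\<Sum>a\<in>A. if P a then 1 else 0)"
proof -
  have "real (card {a\<in>A. P a}) = (\<Sum>a\<in>{a\<in>A. P a}. 1)" by simp
  also have "\<dots> = (\<Sum>a\<in>A. if P a then 1 else 0)"
    using assms by (rule sum.inter_filter)
  finally show ?thesis .
qed

lemma mult_count:
  fixes p n N :: nat
  assumes p: "prime p" and n: "1 \<le> n" "n \<le> N"
  shows "multiplicity p n = card {a\<in>{1..N}. p ^ a dvd n}"
proof -
  have nu: "n \<noteq> 0" "\<not> is_unit p" using n p by auto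
  have "p ^ multiplicity p n dvd n" by (rule multiplicity_dvd)
  hence "p ^ multiplicity p n \<le> n" using n by (intro dvd_imp_le) auto
  moreover have "multiplicity p n < 2 ^ multiplicity p n" by (rule less_exp)
  moreover have "2 ^ multiplicity p n \<le> p ^ multiplicity p n"
    using prime_ge_2_nat[OF p] by (intro power_mono) auto
  ultimately have le: "multiplicity p n \<le> N" using n by linarith
  have "{a\<in>{1..N}. p ^ a dvd n} = {1..multiplicity p n}"
  proof (intro set_eqI iffI)
    fix a assume "a \<in> {a\<in>{1..N}. p ^ a dvd n}"
    hence "1 \<le> a" "p ^ a dvd n" by auto
    hence "a \<le> multiplicity p n" using power_dvd_iff_le_multiplicity[OF nu] by blast
    thus "a \<in> {1..multiplicity p n}" using \<open>1 \<le> a\<close> by simp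
  next
    fix a assume a: "a \<in> {1..multiplicity p n}"
    hence "p ^ a dvd n" using power_dvd_iff_le_multiplicity[OF nu] by simp
    thus "a \<in> {a\<in>{1..N}. p ^ a dvd n}" using a le by simp
  qed
  thus ?thesis by simp
qed

lemma sum_mult_le:
  fixes p N :: nat
  assumes p: "prime p"
  shows "(\<Sum>n\<in>{1..N}. real (multiplicity p n)) \<le> real N / (real p - 1)"
proof -
  have p2: "real p \<ge> 2" using prime_ge_2_nat[OF p] by linarith
  have "(\<Sum>n\<in>{1..N}. real (multiplicity p n))
        = (\<Sum>n\<in>{1..N}. \<Sum>a\<in>{1..N}. if p ^ a dvd n then 1 else 0)"
  proof (intro sum.cong refl)
    fix n assume "n \<in> {1..N}"
    hence "real (multiplicity p n) = real (card {a\<in>{1..N}. p ^ a dvd n})"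
      using mult_count[OF p] by auto
    also have "\<dots> = (\<Sum>a\<in>{1..N}. if p ^ a dvd n then 1 else 0)"
      by (rule card_as_sum) simp
    finally show "real (multiplicity p n) = (\<Sum>a\<in>{1..N}. if p ^ a dvd n then 1 else 0)" .
  qed
  also have "\<dots> = (\<Sum>a\<in>{1..N}. \<Sum>n\<in>{1..N}. if p ^ a dvd n then 1 else 0)"
    by (rule sum.swap)
  also have "\<dots> = (\<Sum>a\<in>{1..N}. real (N div p ^ a))"
  proof (intro sum.cong refl)
    fix a
    have "(\<Sum>n\<in>{1..N}. if p ^ a dvd n then 1 else 0) = real (card {n\<in>{1..N}. p ^ a dvd n})"
      by (rule card_as_sum[symmetric]) simp
    also have "card {n\<in>{1..N}. p ^ a dvd n} = N div p ^ a"
      by (rule card_multiples) (simp add: prime_gt_0_nat[OF p])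
    finally show "(\<Sum>n\<in>{1..N}. if p ^ a dvd n then 1 else 0) = real (N div p ^ a)" .
  qed
  also have "\<dots> \<le> (\<Sum>a\<in>{1..N}. real N * (1 / real p) ^ a)"
  proof (intro sum_mono)
    fix a
    have "real (N div p ^ a) \<le> real N / real (p ^ a)" by (rule of_nat_div_le_of_nat)
    thus "real (N div p ^ a) \<le> real N * (1 / real p) ^ a"
      by (simp add: power_divide)
  qed
  also have "\<dots> = real N * (\<Sum>a\<in>{1..N}. (1 / real p) ^ a)"
    by (simp add: sum_distrib_left)
  also have "\<dots> \<le> real N * ((1 / real p) / (1 - 1 / real p))"
    using p2 by (intro mult_left_mono geom_le) auto
  also have "(1 / real p) / (1 - 1 / real p) = 1 / (real p - 1)"
    using p2 by (simp add: field_simps)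
  finally show ?thesis by simp
qed

lemma sumP_le:
  fixes K :: nat
  assumes K: "K \<ge> 1"
  shows "(\<Sum>p\<in>{p. prime p \<and> p \<le> K}. ln (real p) * real (K div p)) \<le> real K * ln (real K)"
proof -
  define P where "P = {p. prime p \<and> p \<le> K}"
  have finP: "finite P" unfolding P_def by auto
  have "(\<Sum>p\<in>P. ln (real p) * real (K div p))
      = (\<Sum>p\<in>P. \<Sum>n\<in>{1..K}. (if p dvd n then 1 else 0) * ln (real p))"
  proof (intro sum.cong refl)
    fix p assume "p \<in> P"
    hence "p > 0" by (auto simp: P_def prime_gt_0_nat)
    hence "real (K div p) = real (card {n\<in>{1..K}. p dvd n})" by (simp only: card_multiples)
    also have "\<dots> = (\<Sum>n\<in>{1..K}. if p dvd n then 1 else 0)"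
      by (rule card_as_sum) simp
    finally show "ln (real p) * real (K div p) = (\<Sum>n\<in>{1..K}. (if p dvd n then 1 else 0) * ln (real p))"
      by (simp add: sum_distrib_left mult.commute)
  qed
  also have "\<dots> \<le> (\<Sum>p\<in>P. \<Sum>n\<in>{1..K}. real (multiplicity p n) * ln (real p))"
  proof (intro sum_mono)
    fix p n assume "p \<in> P" "n \<in> {1..K}"
    hence p: "prime p" and n: "n \<noteq> 0" by (auto simp: P_def)
    have m1: "p dvd n \<Longrightarrow> multiplicity p n \<ge> 1"
    proof -
      assume "p dvd n"
      moreover have "p \<noteq> Suc 0" using p by auto
      ultimately have "0 < multiplicity p n" using multiplicity_gt_zero_iff[of n p] n by auto
      thus ?thesis by simp
    qed
    have l0: "ln (real p) \<ge> 0" using p prime_gt_0_nat[OF p] by simp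
    show "(if p dvd n then 1 else 0) * ln (real p) \<le> real (multiplicity p n) * ln (real p)"
    proof (cases "p dvd n")
      case True
      hence "1 * ln (real p) \<le> real (multiplicity p n) * ln (real p)"
        using m1 l0 by (intro mult_right_mono) auto
      thus ?thesis using True by simp
    qed (use l0 in simp)
  qed
  also have "\<dots> = (\<Sum>n\<in>{1..K}. \<Sum>p\<in>P. real (multiplicity p n) * ln (real p))"
    by (rule sum.swap)
  also have "\<dots> = (\<Sum>n\<in>{1..K}. ln (real n))"
  proof (intro sum.cong refl)
    fix n assume n: "n \<in> {1..K}"
    have "prime_factors n \<subseteq> P"
    proof
      fix q assume "q \<in> prime_factors n"
      hence "prime q" "q dvd n" by (auto simp: in_prime_factors_iff)
      hence "q \<le> n" using n by (intro dvd_imp_le) auto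
      thus "q \<in> P" using \<open>prime q\<close> n by (auto simp: P_def)
    qed
    thus "(\<Sum>p\<in>P. real (multiplicity p n) * ln (real p)) = ln (real n)"
      using n finP by (subst ln_factor[of n P]) (auto simp: P_def)
  qed
  also have "\<dots> \<le> (\<Sum>n\<in>{1..K}. ln (real K))"
    by (intro sum_mono) auto
  also have "\<dots> = real K * ln (real K)" by simp
  finally show ?thesis unfolding P_def .
qed

lemma A_le:
  fixes K :: nat
  assumes K: "K \<ge> 1"
  shows "(\<Sum>p\<in>{p. prime p \<and> p \<le> K}. ln (real p) / (real p - 1)) \<le> 4 * ln (real K)"
proof -
  have "(\<Sum>p\<in>{p. prime p \<and> p \<le> K}. ln (real p) / (real p - 1))
     \<le> (\<Sum>p\<in>{p. prime p \<and> p \<le> K}. (4 / real K) * (ln (real p) * real (K div p)))"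
  proof (intro sum_mono)
    fix p assume "p \<in> {p. prime p \<and> p \<le> K}"
    hence p: "prime p" "p \<le> K" by auto
    have p2: "real p \<ge> 2" using prime_ge_2_nat[OF p(1)] by linarith
    have lnp: "ln (real p) \<ge> 0" using p2 by simp
    have d1: "K div p \<ge> 1" using p p2 by (simp add: div_greater_zero_iff Suc_le_eq prime_gt_0_nat)
    have "real K < (real (K div p) + 1) * real p"
    proof -
      have "K < (K div p + 1) * p" using prime_gt_0_nat[OF p(1)]
        by (metis add.commute div_mult_mod_eq mod_less_divisor add_less_cancel_left distrib_right mult_1)
      thus ?thesis by (metis of_nat_add of_nat_1 of_nat_less_iff of_nat_mult)
    qed
    hence key: "real K \<le> 2 * real (K div p) * real p" using d1 p2
      by (smt (verit) mult_right_mono of_nat_1 of_nat_le_iff)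
    have "1 / (real p - 1) \<le> 2 / real p" using p2 by (simp add: field_simps)
    also have "2 / real p \<le> 4 * real (K div p) / real K"
      using key p2 K by (simp add: field_simps)
    finally have "1 / (real p - 1) \<le> 4 * real (K div p) / real K" .
    hence "ln (real p) * (1 / (real p - 1)) \<le> ln (real p) * (4 * real (K div p) / real K)"
      using lnp by (rule mult_left_mono)
    thus "ln (real p) / (real p - 1) \<le> 4 / real K * (ln (real p) * real (K div p))"
      by (simp add: field_simps)
  qed
  also have "\<dots> = (4 / real K) * (\<Sum>p\<in>{p. prime p \<and> p \<le> K}. ln (real p) * real (K div p))"
    by (simp add: sum_distrib_left)
  also have "\<dots> \<le> (4 / real K) * (real K * ln (real K))"
    using K by (intro mult_left_mono sumP_le) auto
  also have "\<dots> = 4 * ln (real K)" using K by simp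
  finally show ?thesis .
qed


lemma smooth_bound:
  fixes N K :: nat
  assumes N: "N \<ge> 2" and K: "K \<ge> 1"
  shows "real (card {n\<in>{1..N}. \<forall>p. prime p \<and> p dvd n \<longrightarrow> p \<le> K})
           \<le> sqrt (real N) + 8 * real N * ln (real K) / ln (real N)"
proof -
  define S where "S = {n\<in>{1..N}. \<forall>p. prime p \<and> p dvd n \<longrightarrow> p \<le> K}"
  define P where "P = {p. prime p \<and> p \<le> K}"
  have finP: "finite P" unfolding P_def by auto
  have finS: "finite S" unfolding S_def by auto
  have lnN: "ln (real N) > 0" using N by simp
  have nonneg: "0 \<le> (\<Sum>p\<in>P. real (multiplicity p n) * ln (real p))" for n
    by (intro sum_nonneg mult_nonneg_nonneg) (auto simp: P_def prime_gt_0_nat Suc_le_eq)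
  have "(\<Sum>n\<in>S. ln (real n)) = (\<Sum>n\<in>S. \<Sum>p\<in>P. real (multiplicity p n) * ln (real p))"
  proof (intro sum.cong refl)
    fix n assume n: "n \<in> S"
    have "prime_factors n \<subseteq> P"
      using n by (auto simp: S_def P_def in_prime_factors_iff)
    thus "ln (real n) = (\<Sum>p\<in>P. real (multiplicity p n) * ln (real p))"
      using n finP by (intro ln_factor) (auto simp: S_def P_def)
  qed
  also have "\<dots> \<le> (\<Sum>n\<in>{1..N}. \<Sum>p\<in>P. real (multiplicity p n) * ln (real p))"
    by (intro sum_mono2 nonneg) (auto simp: S_def)
  also have "\<dots> = (\<Sum>p\<in>P. ln (real p) * (\<Sum>n\<in>{1..N}. real (multiplicity p n)))"
    by (subst sum.swap) (simp add: sum_distrib_left mult.commute)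
  also have "\<dots> \<le> (\<Sum>p\<in>P. ln (real p) * (real N / (real p - 1)))"
    by (intro sum_mono mult_left_mono sum_mult_le) (auto simp: P_def prime_gt_0_nat Suc_le_eq)
  also have "\<dots> = real N * (\<Sum>p\<in>P. ln (real p) / (real p - 1))"
    by (simp add: sum_distrib_left field_simps)
  also have "\<dots> \<le> real N * (4 * ln (real K))"
    unfolding P_def using K by (intro mult_left_mono A_le) auto
  finally have up: "(\<Sum>n\<in>S. ln (real n)) \<le> 4 * real N * ln (real K)" by simp
  define T where "T = {n\<in>S. sqrt (real N) < real n}"
  have "(\<Sum>n\<in>T. ln (real N) / 2) \<le> (\<Sum>n\<in>T. ln (real n))"
  proof (intro sum_mono)
    fix n assume "n \<in> T"
    hence "sqrt (real N) < real n" by (simp add: T_def)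
    moreover have s0: "sqrt (real N) > 0" using N by simp
    ultimately have n0: "real n > 0" by linarith
    have "ln (sqrt (real N)) \<le> ln (real n)"
      using ln_le_cancel_iff[OF s0 n0] \<open>sqrt (real N) < real n\<close> by simp
    thus "ln (real N) / 2 \<le> ln (real n)" using N by (simp add: ln_sqrt)
  qed
  also have "\<dots> \<le> (\<Sum>n\<in>S. ln (real n))"
    by (intro sum_mono2 finS) (auto simp: T_def S_def)
  finally have "real (card T) * (ln (real N) / 2) \<le> 4 * real N * ln (real K)"
    using up by simp
  hence cT: "real (card T) \<le> 8 * real N * ln (real K) / ln (real N)"
    using lnN by (simp add: field_simps)
  have "S \<subseteq> T \<union> {1..nat \<lfloor>sqrt (real N)\<rfloor>}"
  proof
    fix n assume n: "n \<in> S"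
    show "n \<in> T \<union> {1..nat \<lfloor>sqrt (real N)\<rfloor>}"
    proof (cases "sqrt (real N) < real n")
      case True thus ?thesis using n by (simp add: T_def)
    next
      case False
      hence "n \<le> nat \<lfloor>sqrt (real N)\<rfloor>" by (simp add: le_nat_floor)
      thus ?thesis using n by (auto simp: S_def)
    qed
  qed
  hence "card S \<le> card (T \<union> {1..nat \<lfloor>sqrt (real N)\<rfloor>})"
    by (intro card_mono) (auto simp: T_def finS)
  also have "\<dots> \<le> card T + nat \<lfloor>sqrt (real N)\<rfloor>"
    using card_Un_le[of T "{1..nat \<lfloor>sqrt (real N)\<rfloor>}"] by simp
  finally have "real (card S) \<le> real (card T) + real (nat \<lfloor>sqrt (real N)\<rfloor>)"
    by linarith
  also have "real (nat \<lfloor>sqrt (real N)\<rfloor>) \<le> sqrt (real N)" by simp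
  finally show ?thesis unfolding S_def using cT by linarith
qed


lemma Q_bound:
  fixes N K :: nat
  assumes K: "K \<ge> 1"
  shows "real (card {n\<in>{1..N}. \<exists>j. K < j \<and> j^2 dvd n}) \<le> real N / real K"
proof -
  have sub: "{n\<in>{1..N}. \<exists>j. K < j \<and> j^2 dvd n} \<subseteq> (\<Union>j\<in>{K+1..N}. {n\<in>{1..N}. j^2 dvd n})"
  proof
    fix n assume "n \<in> {n\<in>{1..N}. \<exists>j. K < j \<and> j^2 dvd n}"
    then obtain j where n: "1 \<le> n" "n \<le> N" and j: "K < j" "j^2 dvd n" by auto
    have "j^2 \<le> n" using j n by (intro dvd_imp_le) auto
    moreover have "j \<le> j^2" by (simp add: power2_eq_square)
    ultimately have "j \<le> N" using n by linarith
    hence "j \<in> {K+1..N}" using j by simp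
    moreover have "n \<in> {n\<in>{1..N}. j^2 dvd n}" using n j by simp
    ultimately show "n \<in> (\<Union>j\<in>{K+1..N}. {n\<in>{1..N}. j^2 dvd n})" by blast
  qed
  have "card {n\<in>{1..N}. \<exists>j. K < j \<and> j^2 dvd n} \<le> card (\<Union>j\<in>{K+1..N}. {n\<in>{1..N}. j^2 dvd n})"
    by (intro card_mono sub) auto
  also have "\<dots> \<le> (\<Sum>j\<in>{K+1..N}. card {n\<in>{1..N}. j^2 dvd n})"
    by (rule card_UN_le) simp
  also have "\<dots> = (\<Sum>j\<in>{K+1..N}. N div j^2)"
  proof (intro sum.cong refl)
    fix j assume "j \<in> {K+1..N}"
    hence "j^2 > 0" by simp
    thus "card {n\<in>{1..N}. j^2 dvd n} = N div j^2" by (rule card_multiples)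
  qed
  finally have c1: "card {n\<in>{1..N}. \<exists>j. K < j \<and> j^2 dvd n} \<le> (\<Sum>j\<in>{K+1..N}. N div j^2)" .
  have "real (card {n\<in>{1..N}. \<exists>j. K < j \<and> j^2 dvd n}) \<le> real (\<Sum>j\<in>{K+1..N}. N div j^2)"
    using c1 by (simp only: of_nat_le_iff)
  also have "\<dots> = (\<Sum>j\<in>{K+1..N}. real (N div j^2))" by (rule of_nat_sum)
  also have "\<dots> \<le> (\<Sum>j\<in>{K+1..N}. real N * (1 / (real j)^2))"
  proof (intro sum_mono)
    fix j
    have "real (N div j^2) \<le> real N / real (j^2)" by (rule of_nat_div_le_of_nat)
    thus "real (N div j^2) \<le> real N * (1 / (real j)^2)" by simp
  qed
  also have "\<dots> = real N * (\<Sum>j\<in>{K+1..N}. 1 / (real j)^2)"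
    by (simp add: sum_distrib_left)
  also have "(\<Sum>j\<in>{K+1..N}. 1 / (real j)^2) \<le> 1 / real K"
  proof (cases "N \<le> K")
    case True thus ?thesis by simp
  next
    case False
    define d where "d = N - K"
    have "N = K + d" using False by (simp add: d_def)
    hence "(\<Sum>j\<in>{K+1..N}. 1 / (real j)^2) \<le> 1 / real K - 1 / real N"
      using sq_sum_le[OF K, of d] by simp
    also have "\<dots> \<le> 1 / real K" by simp
    finally show ?thesis .
  qed
  hence "real N * (\<Sum>j\<in>{K+1..N}. 1 / (real j)^2) \<le> real N * (1 / real K)"
    by (intro mult_left_mono) auto
  finally show ?thesis by simp
qed


lemma main_bound:
  fixes x k :: real and t :: nat
  assumes x: "x \<ge> 2" and k: "k \<ge> 2" and t: "t \<ge> 1"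
  shows "\<bar>prob_good x k t - 1\<bar> \<le> 30 * (real t * ln k / ln x + real t / k)"
proof -
  define N where "N = nat \<lfloor>x\<rfloor>"
  define K where "K = nat \<lfloor>k\<rfloor>"
  have fx: "\<lfloor>x\<rfloor> \<ge> 2" using x by (simp add: le_floor_iff)
  have rN: "real N = of_int \<lfloor>x\<rfloor>" using fx by (simp add: N_def)
  have N2: "N \<ge> 2" using fx by (simp add: N_def le_nat_iff)
  have Nx: "real N \<le> x" "x < real N + 1" using rN by linarith+
  have fk: "\<lfloor>k\<rfloor> \<ge> 2" using k by (simp add: le_floor_iff)
  have rK: "real K = of_int \<lfloor>k\<rfloor>" using fk by (simp add: K_def)
  have K2: "K \<ge> 2" using fk by (simp add: K_def le_nat_iff)
  have Kk: "real K \<le> k" "k < real K + 1" using rK by linarith+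
  define G where "G = {m\<in>{1..N}. good k t m}"
  define B where "B = {1..N} - G"
  have finG: "finite G" unfolding G_def by auto
  have GN: "G \<subseteq> {1..N}" unfolding G_def by auto
  have cB: "card B = N - card G" unfolding B_def using GN card_Diff_subset[OF finG GN] by simp
  have cGN: "card G \<le> N" using card_mono[OF _ GN] by simp
  have prob: "prob_good x k t = real (card G) / real N"
    unfolding prob_good_def G_def N_def by simp
  have abs_eq: "\<bar>prob_good x k t - 1\<bar> = real (card B) / real N"
    using cGN N2 unfolding prob cB by (simp add: field_simps of_nat_diff)
  define S where "S = {n\<in>{1..N}. \<forall>p. prime p \<and> p dvd n \<longrightarrow> p \<le> K}"
  define Q where "Q = {n\<in>{1..N}. \<exists>j. K < j \<and> j^2 dvd n}"
  have Bsub: "B \<subseteq> {1..t} \<union> (\<Union>i\<in>{..<t}. (\<lambda>n. n + i) ` (S \<union> Q))"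
  proof
    fix m assume "m \<in> B"
    hence m: "m \<in> {1..N}" and ng: "\<not> good k t m" by (auto simp: B_def G_def)
    from ng obtain i where i: "i < t" and
      nop: "\<And>p. prime p \<Longrightarrow> real p > k \<Longrightarrow> multiplicity (int p) (int m - int i) \<noteq> 1"
      unfolding good_def by blast
    show "m \<in> {1..t} \<union> (\<Union>i\<in>{..<t}. (\<lambda>n. n + i) ` (S \<union> Q))"
    proof (cases "m \<le> i")
      case True thus ?thesis using m i by auto
    next
      case False
      define n where "n = m - i"
      have mn: "m = n + i" "int m - int i = int n" using False by (auto simp: n_def)
      have n: "n \<in> {1..N}" using m False by (auto simp: n_def)
      have nop': "\<And>p. prime p \<Longrightarrow> K < p \<Longrightarrow> multiplicity p n \<noteq> 1"
      proof -
        fix p assume p: "prime p" "K < p"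
        hence "real p \<ge> real K + 1" by linarith
        hence "real p > k" using Kk by linarith
        thus "multiplicity p n \<noteq> 1" using nop[OF p(1)] mn by (simp add: mult_int)
      qed
      have "n \<in> S \<union> Q"
      proof (cases "n \<in> S")
        case False
        then obtain p where p: "prime p" "p dvd n" "\<not> p \<le> K" using n by (auto simp: S_def)
        have n0: "n \<noteq> 0" using n by auto
        have "multiplicity p n > 0"
          using multiplicity_gt_zero_iff[of n p] n0 p prime_gt_1_nat[OF p(1)] by auto
        moreover have "multiplicity p n \<noteq> 1" using nop' p by auto
        ultimately have "2 \<le> multiplicity p n" by linarith
        hence "p ^ 2 dvd n" by (rule multiplicity_dvd')
        thus ?thesis using n p by (auto simp: Q_def)
      qed simp
      hence "m \<in> (\<lambda>n. n + i) ` (S \<union> Q)" using mn(1) by blast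
      thus ?thesis using i by blast
    qed
  qed
  have "card B \<le> card ({1..t} \<union> (\<Union>i\<in>{..<t}. (\<lambda>n. n + i) ` (S \<union> Q)))"
    by (intro card_mono Bsub) (auto simp: S_def Q_def)
  also have "\<dots> \<le> card {1..t} + card (\<Union>i\<in>{..<t}. (\<lambda>n. n + i) ` (S \<union> Q))"
    by (rule card_Un_le)
  also have "card (\<Union>i\<in>{..<t}. (\<lambda>n. n + i) ` (S \<union> Q)) \<le> (\<Sum>i\<in>{..<t}. card ((\<lambda>n. n + i) ` (S \<union> Q)))"
    by (rule card_UN_le) simp
  also have "\<dots> \<le> (\<Sum>i\<in>{..<t}. card S + card Q)"
    by (intro sum_mono order.trans[OF card_image_le card_Un_le]) (auto simp: S_def Q_def)
  finally have "card B \<le> t + t * (card S + card Q)" by simp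
  hence cB2: "real (card B) \<le> real t + real t * (real (card S) + real (card Q))"
    by (metis of_nat_add of_nat_le_iff of_nat_mult)
  have cS: "real (card S) \<le> sqrt (real N) + 8 * real N * ln (real K) / ln (real N)"
    unfolding S_def using N2 K2 by (intro smooth_bound) auto
  have cQ: "real (card Q) \<le> real N / real K"
    unfolding Q_def using K2 by (intro Q_bound) auto
  define L where "L = ln x"
  define lk where "lk = ln k"
  have L0: "L > 0" using x by (simp add: L_def)
  have lk2: "lk \<ge> ln 2" using k by (simp add: lk_def)
  have "ln (1/2::real) \<le> 1/2 - 1" by (rule ln_le_minus_one) simp
  hence ln2: "ln (2::real) \<ge> 1/2" by (simp add: ln_div)
  have lk0: "lk \<ge> 1/2" using lk2 ln2 by linarith
  have lnN0: "ln (real N) > 0" using N2 by simp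
  have LN: "L \<le> 2 * ln (real N)"
  proof -
    have rN2: "real N \<ge> 2" using N2 by linarith
    hence "2 * real N \<le> real N * real N" by (intro mult_right_mono) auto
    hence "x \<le> real N * real N" using Nx rN2 by linarith
    hence "ln x \<le> ln (real N * real N)" using x by (subst ln_le_cancel_iff) auto
    also have "\<dots> = 2 * ln (real N)" using N2 by (simp add: ln_mult)
    finally show ?thesis by (simp add: L_def)
  qed
  have lnK: "ln (real K) \<le> lk" using Kk K2 by (simp add: lk_def)
  have sqN: "sqrt (real N) \<le> 2 * real N / ln (real N)"
  proof -
    have "ln (sqrt (real N)) \<le> sqrt (real N) - 1" using N2 by (intro ln_le_minus_one) simp
    hence "ln (real N) \<le> 2 * sqrt (real N)" using N2 by (simp add: ln_sqrt)
    hence "sqrt (real N) * ln (real N) \<le> sqrt (real N) * (2 * sqrt (real N))"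
      by (intro mult_left_mono) auto
    also have "\<dots> = 2 * real N" by simp
    finally show ?thesis using lnN0 by (simp add: field_simps)
  qed
  have lnNN: "ln (real N) \<le> real N" using N2 ln_le_minus_one[of "real N"] by simp
  have Npos: "real N > 0" using N2 by simp
  have r1: "real t / real N \<le> 4 * (real t * lk / L)"
  proof -
    have "1 / real N \<le> 1 / ln (real N)" using lnNN lnN0 by (simp add: frac_le)
    also have "\<dots> \<le> 2 / L" using LN L0 lnN0 by (simp add: field_simps)
    also have "\<dots> \<le> 4 * lk / L" using lk0 L0 by (simp add: field_simps)
    finally have "1 / real N \<le> 4 * lk / L" .
    hence "real t * (1 / real N) \<le> real t * (4 * lk / L)" by (intro mult_left_mono) auto
    thus ?thesis by (simp add: mult.left_commute)
  qed
  have r2: "real (card S) / real N \<le> 24 * lk / L"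
  proof -
    have "real (card S) / real N \<le> (2 * real N / ln (real N) + 8 * real N * lk / ln (real N)) / real N"
    proof (intro divide_right_mono)
      have "8 * real N * ln (real K) / ln (real N) \<le> 8 * real N * lk / ln (real N)"
        using lnK lnN0 Npos by (intro divide_right_mono mult_left_mono) auto
      thus "real (card S) \<le> 2 * real N / ln (real N) + 8 * real N * lk / ln (real N)"
        using cS sqN by linarith
    qed simp
    also have "\<dots> = (2 + 8 * lk) / ln (real N)" using Npos lnN0 by (simp add: add_divide_distrib)
    also have "\<dots> \<le> (2 + 8 * lk) / (L / 2)"
      using LN L0 lk0 by (intro divide_left_mono) auto
    also have "\<dots> = (4 + 16 * lk) / L" by (simp add: field_simps)
    also have "\<dots> \<le> 24 * lk / L" using L0 lk0 by (intro divide_right_mono) auto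
    finally show ?thesis .
  qed
  have r3: "real (card Q) / real N \<le> 2 / k"
  proof -
    have "real (card Q) / real N \<le> (real N / real K) / real N" using cQ by (intro divide_right_mono) auto
    also have "\<dots> = 1 / real K" using Npos by simp
    also have "\<dots> \<le> 2 / k" using Kk K2 by (simp add: field_simps)
    finally show ?thesis .
  qed
  have "\<bar>prob_good x k t - 1\<bar> \<le> (real t + real t * (real (card S) + real (card Q))) / real N"
    unfolding abs_eq using cB2 Npos by (intro divide_right_mono) auto
  also have "\<dots> = real t / real N + real t * (real (card S) / real N) + real t * (real (card Q) / real N)"
    using Npos by (simp add: field_simps)
  also have "\<dots> \<le> 4 * (real t * lk / L) + real t * (24 * lk / L) + real t * (2 / k)"
    using r1 r2 r3 by (intro add_mono mult_left_mono) auto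
  also have "\<dots> = 28 * (real t * lk / L) + 2 * (real t / k)" by (simp add: field_simps)
  also have "\<dots> \<le> 30 * (real t * lk / L + real t / k)"
    using L0 lk0 k by (simp add: field_simps)
  finally show ?thesis by (simp add: L_def lk_def)
qed

theorem corollary4p3:
  shows "\<exists>C::real. \<forall>(x::real) (k::real) (t::nat). x \<ge> 2 \<longrightarrow> k \<ge> 2 \<longrightarrow> t \<ge> 1 \<longrightarrow>
           \<bar>prob_good x k t - 1\<bar> \<le> C * (real t * ln k / ln x + real t / k)"
  using main_bound by blast

end
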